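(* Let $\mathbb F\in\{\mathbb R,\mathbb C\}$, let $P$ be an $n$-dimensional manifold over $\mathbb F$ with empty boundary, and let $X,Y$ be differentiable (holomorphic if $\mathbb F=\mathbb C$) vector fields on $P$ such that $Y$ tracks $X$. Then $\mathsf Z(X)$ and $\mathsf D(X,Y)$ are both $X$-invariant and $Y$-invariant.
   Context: $Y$ tracks $X$ if $[Y,X]=fX$ for some continuous function $f\colon P\to\mathbb F$. $\mathsf Z(X)$ is the zero set of $X$. The dependency set is $\mathsf D(X,Y)=\{p\in P: X(p)\wedge_{\mathbb F}Y(p)=0\}$, i.e. the set where $X(p),Y(p)$ are linearly dependent over $\mathbb F$. A set $S$ is $Z$-invariant if it contains the orbits under (the local flow of) $Z$ of each of its points. *)

theory Defs
  imports "HOL-Analysis.Analysis"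
begin

text \<open>Ground field F: a type of class real_normed_field (commutative normed division
  algebra over the reals, i.e. essentially real or complex).
  Differentiability is real Frechet differentiability; "over F" means in addition that the
  derivative is F-linear (for F = complex this is holomorphy).\<close>

definition F_linear :: "('f::real_normed_field ^ 'n \<Rightarrow> 'f ^ 'n) \<Rightarrow> bool" where
  "F_linear L \<longleftrightarrow> (\<forall>c v. L (c *s v) = c *s L v)"

coinductive smooth_map_on :: "('a::real_normed_vector) set \<Rightarrow> ('a \<Rightarrow> 'a) \<Rightarrow> bool"
  for S where
  "f differentiable_on S \<Longrightarrow> (\<forall>v. smooth_map_on S (\<lambda>x. frechet_derivative f (at x) v))
     \<Longrightarrow> smooth_map_on S f"

definition F_smooth_on :: "('f::real_normed_field ^ 'n) set \<Rightarrow> ('f ^ 'n \<Rightarrow> 'f ^ 'n) \<Rightarrow> bool" where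
  "F_smooth_on S f \<longleftrightarrow> smooth_map_on S f \<and> (\<forall>x\<in>S. F_linear (frechet_derivative f (at x)))"

definition F_C1_on :: "('f::real_normed_field ^ 'n) set \<Rightarrow> ('f ^ 'n \<Rightarrow> 'f ^ 'n) \<Rightarrow> bool" where
  "F_C1_on S g \<longleftrightarrow> (\<forall>x\<in>S. g differentiable (at x) \<and> F_linear (frechet_derivative g (at x)))
      \<and> (\<forall>v. continuous_on S (\<lambda>x. frechet_derivative g (at x) v))"

definition is_chart :: "('p::topological_space) set \<times> ('p \<Rightarrow> 'f::real_normed_field ^ 'n) \<Rightarrow> bool" where
  "is_chart c \<longleftrightarrow> open (fst c) \<and> open (snd c ` fst c) \<and> inj_on (snd c) (fst c)
     \<and> continuous_on (fst c) (snd c) \<and> continuous_on (snd c ` fst c) (inv_into (fst c) (snd c))"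

definition F_atlas :: "(('p::topological_space) set \<times> ('p \<Rightarrow> 'f::real_normed_field ^ 'n)) set \<Rightarrow> bool" where
  "F_atlas A \<longleftrightarrow> (\<forall>c\<in>A. is_chart c) \<and> (\<Union>c\<in>A. fst c) = UNIV
     \<and> (\<forall>c\<in>A. \<forall>d\<in>A. F_smooth_on (snd c ` (fst c \<inter> fst d)) (snd d \<circ> inv_into (fst c) (snd c)))"

text \<open>A vector field X is given by its coordinate vectors: X p c is the coordinate vector of
  X(p) in the chart c (meaningful for p in the domain of c); they must obey the tangent
  transformation law.\<close>
definition vector_field :: "(('p::topological_space) set \<times> ('p \<Rightarrow> 'f::real_normed_field ^ 'n)) set
     \<Rightarrow> ('p \<Rightarrow> 'p set \<times> ('p \<Rightarrow> 'f ^ 'n) \<Rightarrow> 'f ^ 'n) \<Rightarrow> bool" where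
  "vector_field A X \<longleftrightarrow> (\<forall>c\<in>A. \<forall>d\<in>A. \<forall>p\<in>fst c \<inter> fst d.
      X p d = frechet_derivative (snd d \<circ> inv_into (fst c) (snd c)) (at (snd c p)) (X p c))"

definition local_rep where
  "local_rep X c = (\<lambda>y. X (inv_into (fst c) (snd c) y) c)"

definition diff_vector_field where
  "diff_vector_field A X \<longleftrightarrow> vector_field A X \<and>
     (\<forall>c\<in>A. F_C1_on (snd c ` fst c) (local_rep X c))"

text \<open>Coordinate vector of the Lie bracket [Y,X] = YX - XY at p in chart c:
  DX(Y) - DY(X) in local coordinates.\<close>
definition lie_bracket_coord where
  "lie_bracket_coord Y X p c =
     frechet_derivative (local_rep X c) (at (snd c p)) (Y p c)
     - frechet_derivative (local_rep Y c) (at (snd c p)) (X p c)"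

definition tracks where
  "tracks A Y X \<longleftrightarrow> (\<exists>f :: 'p::topological_space \<Rightarrow> 'f::real_normed_field. continuous_on UNIV f \<and>
     (\<forall>c\<in>A. \<forall>p\<in>fst c. lie_bracket_coord Y X p c = f p *s X p (c :: 'p set \<times> ('p \<Rightarrow> 'f ^ 'n))))"

definition zero_set where
  "zero_set A X = {p. \<forall>c\<in>A. p \<in> fst c \<longrightarrow> X p c = 0}"

definition dep_set where
  "dep_set A X Y = {p. \<forall>c\<in>A. p \<in> fst c \<longrightarrow>
     (\<exists>a b :: 'f::real_normed_field. (a, b) \<noteq> (0, 0) \<and> a *s X p c + b *s Y p (c :: _ \<times> (_ \<Rightarrow> 'f ^ 'n)) = 0)}"

definition integral_curve where
  "integral_curve A X \<gamma> J \<longleftrightarrow> is_interval J \<and> continuous_on J \<gamma> \<and>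
     (\<forall>t\<in>J. \<forall>c\<in>A. \<gamma> t \<in> fst c \<longrightarrow>
        ((snd c \<circ> \<gamma>) has_vector_derivative X (\<gamma> t) c) (at t within J))"

text \<open>S is X-invariant: it contains the orbit of each of its points under the local flow of X,
  i.e. every integral curve (of real time) passing through a point of S stays in S.\<close>
definition invariant where
  "invariant A X S \<longleftrightarrow> (\<forall>\<gamma> (J :: real set). integral_curve A X \<gamma> J \<and> 0 \<in> J \<and> \<gamma> 0 \<in> S
     \<longrightarrow> \<gamma> ` J \<subseteq> S)"

end

theory Submission
  imports Defs
begin

lemma mvt_vec:
  fixes w :: "real \<Rightarrow> 'a::real_normed_vector"
  assumes "convex C" "\<And>t. t \<in> C \<Longrightarrow> (w has_vector_derivative w' t) (at t within C)"
    "\<And>t. t \<in> C \<Longrightarrow> norm (w' t) \<le> B" "x \<in> C" "y \<in> C"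
  shows "norm (w x - w y) \<le> B * norm (x - y)"
proof (rule differentiable_bound[OF assms(1), where f' = "\<lambda>t h. h *\<^sub>R w' t"])
  fix t assume t: "t \<in> C"
  show "(w has_derivative (\<lambda>h. h *\<^sub>R w' t)) (at t within C)"
    using assms(2)[OF t] by (simp add: has_vector_derivative_def)
  show "onorm (\<lambda>h. h *\<^sub>R w' t) \<le> B"
  proof (rule onorm_le)
    fix h :: real show "norm (h *\<^sub>R w' t) \<le> B * norm h"
      using assms(3)[OF t] by (simp add: mult.commute) (metis abs_ge_zero mult.commute mult_left_mono)
  qed
qed (use assms in auto)

lemma ode_zero:
  fixes w :: "'i \<Rightarrow> real \<Rightarrow> 'a::real_normed_vector"
  assumes fin: "finite Ix" and cI: "compact I" and cvI: "convex I"
    and der: "\<And>k t. k \<in> Ix \<Longrightarrow> t \<in> I \<Longrightarrow> (w k has_vector_derivative w' k t) (at t within I)"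
    and bnd: "\<And>k t. k \<in> Ix \<Longrightarrow> t \<in> I \<Longrightarrow> norm (w' k t) \<le> K * (\<Sum>j\<in>Ix. norm (w j t))"
    and t0: "t0 \<in> I" "\<And>k. k \<in> Ix \<Longrightarrow> w k t0 = 0" and t: "t \<in> I"
  shows "\<forall>k\<in>Ix. w k t = 0"
proof -
  define K' where "K' = max K 0"
  have K'0: "K' \<ge> 0" by (simp add: K'_def)
  have bnd': "norm (w' k t) \<le> K' * (\<Sum>j\<in>Ix. norm (w j t))" if "k \<in> Ix" "t \<in> I" for k t
  proof -
    have "K * (\<Sum>j\<in>Ix. norm (w j t)) \<le> K' * (\<Sum>j\<in>Ix. norm (w j t))"
      by (intro mult_right_mono) (auto simp: K'_def sum_nonneg)
    then show ?thesis using bnd[OF that] by linarith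
  qed
  define N where "N = real (card Ix)"
  define d where "d = 1 / (2 * (N * K' + 1))"
  have N0: "N \<ge> 0" by (simp add: N_def)
  have NK: "N * K' \<ge> 0" using N0 K'0 by simp
  have d0: "d > 0" using NK by (simp add: d_def)
  have dNK: "N * K' * d \<le> 1/2" using NK by (simp add: d_def field_simps)
  define g where "g t = (\<Sum>j\<in>Ix. norm (w j t))" for t
  have contw: "continuous_on I (w k)" if "k \<in> Ix" for k
    using der[OF that] by (rule continuous_on_vector_derivative)
  have contg: "continuous_on S g" if "S \<subseteq> I" for S
    unfolding g_def using contw that
    by (intro continuous_intros) (auto intro: continuous_on_subset)
  have g0: "g t \<ge> 0" for t by (simp add: g_def sum_nonneg)
  have gz: "g t = 0 \<longleftrightarrow> (\<forall>k\<in>Ix. w k t = 0)" for t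
    unfolding g_def using fin by (simp add: sum_nonneg_eq_0_iff)
  define Z where "Z = {t \<in> I. g t = 0}"
  have cl: "closedin (top_of_set I) Z"
    unfolding Z_def by (rule continuous_closedin_preimage_constant[OF contg]) simp
  have loc: "I \<inter> cball s d \<subseteq> Z" if s: "s \<in> Z" for s
  proof -
    define C where "C = I \<inter> cball s d"
    have sC: "s \<in> C" using s d0 by (auto simp: C_def Z_def)
    have cC: "compact C" unfolding C_def using cI by (simp add: compact_Int_closed)
    have cvC: "convex C" unfolding C_def using cvI by (simp add: convex_Int)
    have cgC: "continuous_on C g" by (rule contg) (auto simp: C_def)
    obtain u where u: "u \<in> C" "\<And>y. y \<in> C \<Longrightarrow> g y \<le> g u"
      using continuous_attains_sup[OF cC _ cgC] sC by auto
    let ?m = "g u"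
    have wb: "norm (w k y) \<le> K' * ?m * d" if k: "k \<in> Ix" and y: "y \<in> C" for k y
    proof -
      have "norm (w k y - w k s) \<le> (K' * ?m) * norm (y - s)"
      proof (rule mvt_vec[OF cvC, where w' = "w' k"])
        fix t assume tC: "t \<in> C"
        hence tI: "t \<in> I" by (simp add: C_def)
        show "(w k has_vector_derivative w' k t) (at t within C)"
          using der[OF k tI] by (rule has_vector_derivative_within_subset) (auto simp: C_def)
        have "norm (w' k t) \<le> K' * g t" using bnd'[OF k tI] by (simp add: g_def)
        also have "\<dots> \<le> K' * ?m" using u(2)[OF tC] K'0 by (simp add: mult_left_mono)
        finally show "norm (w' k t) \<le> K' * ?m" .
      qed (use y sC in auto)
      moreover have "w k s = 0" using s k gz by (auto simp: Z_def)
      moreover have "norm (y - s) \<le> d" using y by (auto simp: C_def dist_norm norm_minus_commute)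
      moreover have "K' * ?m \<ge> 0" using K'0 g0 by simp
      ultimately show ?thesis
        by (smt (verit, best) mult_left_mono diff_zero)
    qed
    have gb: "g y \<le> N * (K' * ?m * d)" if y: "y \<in> C" for y
    proof -
      have "g y \<le> (\<Sum>j\<in>Ix. K' * ?m * d)" unfolding g_def[of y] by (rule sum_mono) (use wb y in auto)
      then show ?thesis by (simp add: N_def)
    qed
    have "?m \<le> N * K' * d * ?m" using gb[OF u(1)] by (simp add: algebra_simps)
    also have "\<dots> \<le> 1/2 * ?m" using dNK g0 by (intro mult_right_mono) auto
    finally have "?m \<le> 0" by simp
    hence "\<forall>y\<in>C. g y = 0" using u(2) g0 by (meson order_antisym order_trans)
    then show ?thesis by (auto simp: C_def Z_def)
  qed
  have op: "openin (top_of_set I) Z"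
    unfolding openin_euclidean_subtopology_iff
  proof (intro conjI ballI)
    show "Z \<subseteq> I" by (auto simp: Z_def)
    fix s assume "s \<in> Z"
    then show "\<exists>e>0. \<forall>x'\<in>I. dist x' s < e \<longrightarrow> x' \<in> Z"
      using loc[of s] d0 by (intro exI[of _ d]) (auto simp: dist_commute subset_iff)
  qed
  have "Z = {} \<or> Z = I"
    using convex_connected[OF cvI] op cl unfolding connected_clopen by blast
  moreover have "t0 \<in> Z" using t0 gz by (auto simp: Z_def)
  ultimately have "t \<in> Z" using t by auto
  then show ?thesis using gz by (auto simp: Z_def)
qed

lemma cont_bounded:
  fixes g :: "real \<Rightarrow> 'a::real_normed_vector"
  assumes "compact I" "continuous_on I g"
  obtains B where "\<And>t. t \<in> I \<Longrightarrow> norm (g t) \<le> B"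
  using compact_imp_bounded[OF compact_continuous_image[OF assms(2,1)]]
  unfolding bounded_iff by auto

lemma lin_expand:
  fixes L :: "'f::real_normed_field ^ 'n \<Rightarrow> 'f ^ 'n"
  assumes "linear L" "\<And>c v. L (c *s v) = c *s L v"
  shows "L v $ i = (\<Sum>k\<in>UNIV. v $ k * L (axis k 1) $ i)"
proof -
  have "L v = L (\<Sum>k\<in>UNIV. v $ k *s axis k 1)" by (simp add: basis_expansion)
  also have "\<dots> = (\<Sum>k\<in>UNIV. L (v $ k *s axis k 1))" by (rule linear_sum[OF assms(1)])
  also have "\<dots> = (\<Sum>k\<in>UNIV. v $ k *s L (axis k 1))" by (simp add: assms(2))
  finally show ?thesis by simp
qed

lemma evolve:
  fixes x y :: "real \<Rightarrow> 'f::real_normed_field ^ 'n"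
    and A :: "real \<Rightarrow> 'f ^ 'n \<Rightarrow> 'f ^ 'n" and p r :: "real \<Rightarrow> 'f"
  assumes cI: "compact I" and cvI: "convex I"
    and dx: "\<And>t. t \<in> I \<Longrightarrow> (x has_vector_derivative (p t *s x t + A t (x t))) (at t within I)"
    and dy: "\<And>t. t \<in> I \<Longrightarrow> (y has_vector_derivative (r t *s x t + A t (y t))) (at t within I)"
    and cp: "continuous_on I p"
    and lin: "\<And>t. t \<in> I \<Longrightarrow> linear (A t)"
    and Fl: "\<And>t c v. t \<in> I \<Longrightarrow> A t (c *s v) = c *s A t v"
    and cA: "\<And>v. continuous_on I (\<lambda>t. A t v)"
    and t12: "t1 \<in> I" "t2 \<in> I"
  shows "(x t1 = 0 \<longrightarrow> x t2 = 0) \<and>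
    ((\<forall>i j. x t1 $ i * y t1 $ j - x t1 $ j * y t1 $ i = 0) \<longrightarrow>
     (\<forall>i j. x t2 $ i * y t2 $ j - x t2 $ j * y t2 $ i = 0))"
proof -
  define a where "a t i k = A t (axis k 1) $ i" for t i k
  have ex: "A t v $ i = (\<Sum>k\<in>UNIV. v $ k * a t i k)" if "t \<in> I" for t v i
    unfolding a_def by (rule lin_expand[OF lin[OF that] Fl[OF that]])
  have ca: "continuous_on I (\<lambda>t. \<Sum>i\<in>UNIV. \<Sum>k\<in>UNIV. norm (a t i k))"
    unfolding a_def by (intro continuous_intros cA)
  obtain B where B: "\<And>t. t \<in> I \<Longrightarrow> norm (\<Sum>i\<in>UNIV. \<Sum>k\<in>UNIV. norm (a t i k)) \<le> B"
    using cont_bounded[OF cI ca] by blast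
  have aB: "norm (a t i k) \<le> B" if "t \<in> I" for t i k
  proof -
    have "norm (a t i k) \<le> (\<Sum>k\<in>UNIV. norm (a t i k))"
      by (rule member_le_sum) auto
    also have "\<dots> \<le> (\<Sum>i\<in>UNIV. \<Sum>k\<in>UNIV. norm (a t i k))"
      by (rule member_le_sum) (auto intro: sum_nonneg)
    also have "\<dots> \<le> B" using B[OF that] by (simp add: sum_nonneg)
    finally show ?thesis .
  qed
  have B0: "B \<ge> 0" using aB[OF t12(1)] norm_ge_zero order_trans by blast
  obtain Bp where Bp: "\<And>t. t \<in> I \<Longrightarrow> norm (p t) \<le> Bp"
    using cont_bounded[OF cI cp] by blast
  have Bp0: "Bp \<ge> 0" using Bp[OF t12(1)] norm_ge_zero order_trans by blast
  have dxi: "((\<lambda>t. x t $ i) has_vector_derivative (p t * x t $ i + (\<Sum>k\<in>UNIV. x t $ k * a t i k)))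
     (at t within I)" if "t \<in> I" for t i
    using bounded_linear.has_vector_derivative[OF bounded_linear_vec_nth dx[OF that], of i]
    by (simp add: ex[OF that])
  have dyi: "((\<lambda>t. y t $ i) has_vector_derivative (r t * x t $ i + (\<Sum>k\<in>UNIV. y t $ k * a t i k)))
     (at t within I)" if "t \<in> I" for t i
    using bounded_linear.has_vector_derivative[OF bounded_linear_vec_nth dy[OF that], of i]
    by (simp add: ex[OF that])
  have part1: "x t2 = 0" if "x t1 = 0"
  proof -
    have "\<forall>k\<in>UNIV. x t2 $ k = 0"
    proof (rule ode_zero[where w = "\<lambda>i t. x t $ i" and Ix = UNIV and I = I and K = "Bp + B"
          and w' = "\<lambda>i t. p t * x t $ i + (\<Sum>k\<in>UNIV. x t $ k * a t i k)"])
      fix k t assume t: "t \<in> I"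
      have "norm (p t * x t $ k + (\<Sum>j\<in>UNIV. x t $ j * a t k j))
          \<le> norm (p t) * norm (x t $ k) + (\<Sum>j\<in>UNIV. norm (x t $ j) * norm (a t k j))"
        by (rule order_trans[OF norm_triangle_ineq add_mono])
           (auto simp: norm_mult intro!: order_trans[OF norm_sum] sum_mono)
      also have "\<dots> \<le> Bp * (\<Sum>j\<in>UNIV. norm (x t $ j)) + (\<Sum>j\<in>UNIV. norm (x t $ j) * B)"
        by (intro add_mono mult_mono sum_mono Bp t member_le_sum aB mult_left_mono) (auto simp: Bp0)
      also have "\<dots> = (Bp + B) * (\<Sum>j\<in>UNIV. norm (x t $ j))"
        by (simp add: algebra_simps sum_distrib_left sum_distrib_right sum.distrib)
      finally show "norm (p t * x t $ k + (\<Sum>j\<in>UNIV. x t $ j * a t k j))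
          \<le> (Bp + B) * (\<Sum>j\<in>UNIV. norm (x t $ j))" .
    qed (use cI cvI dxi t12 that in auto)
    then show ?thesis by (simp add: vec_eq_iff)
  qed
  have part2: "\<forall>i j. x t2 $ i * y t2 $ j - x t2 $ j * y t2 $ i = 0"
    if h: "\<forall>i j. x t1 $ i * y t1 $ j - x t1 $ j * y t1 $ i = 0"
  proof -
    define m where "m ij t = x t $ fst ij * y t $ snd ij - x t $ snd ij * y t $ fst ij" for ij t
    define N where "N = real CARD('n)"
    define m' where "m' ij t = p t * m ij t + (\<Sum>k\<in>UNIV. a t (fst ij) k * m (k, snd ij) t)
        + (\<Sum>k\<in>UNIV. a t (snd ij) k * m (fst ij, k) t)" for ij t
    have "\<forall>ij\<in>UNIV. m ij t2 = 0"
    proof (rule ode_zero[where w = m and Ix = UNIV and I = I and K = "Bp + 2 * N * B" and w' = m'])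
      fix ij :: "'n \<times> 'n" and t assume t: "t \<in> I"
      obtain i j where ij: "ij = (i, j)" by fastforce
      have "(m ij has_vector_derivative
          ((x t $ i * (r t * x t $ j + (\<Sum>k\<in>UNIV. y t $ k * a t j k)) +
            (p t * x t $ i + (\<Sum>k\<in>UNIV. x t $ k * a t i k)) * y t $ j)
         - (x t $ j * (r t * x t $ i + (\<Sum>k\<in>UNIV. y t $ k * a t i k)) +
            (p t * x t $ j + (\<Sum>k\<in>UNIV. x t $ k * a t j k)) * y t $ i))) (at t within I)"
        unfolding m_def ij fst_conv snd_conv
        by (intro has_vector_derivative_diff has_vector_derivative_mult dxi dyi t)
      moreover have "(x t $ i * (r t * x t $ j + (\<Sum>k\<in>UNIV. y t $ k * a t j k)) +
            (p t * x t $ i + (\<Sum>k\<in>UNIV. x t $ k * a t i k)) * y t $ j)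
         - (x t $ j * (r t * x t $ i + (\<Sum>k\<in>UNIV. y t $ k * a t i k)) +
            (p t * x t $ j + (\<Sum>k\<in>UNIV. x t $ k * a t j k)) * y t $ i) = m' ij t"
        unfolding m'_def m_def ij fst_conv snd_conv
        by (simp add: algebra_simps sum_distrib_left sum_distrib_right sum_subtractf sum.distrib)
      ultimately show "(m ij has_vector_derivative m' ij t) (at t within I)" by simp
    next
      fix ij :: "'n \<times> 'n" and t assume t: "t \<in> I"
      define S where "S = (\<Sum>j\<in>UNIV. norm (m j t))"
      have mS: "norm (m kl t) \<le> S" for kl
        unfolding S_def by (rule member_le_sum) auto
      have S0: "S \<ge> 0" unfolding S_def by (simp add: sum_nonneg)
      have sb: "norm (\<Sum>k\<in>UNIV. a t i k * m (f k) t) \<le> N * B * S" for i f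
      proof -
        have "norm (\<Sum>k\<in>UNIV. a t i k * m (f k) t) \<le> (\<Sum>k\<in>UNIV. norm (a t i k) * norm (m (f k) t))"
          by (rule order_trans[OF norm_sum]) (simp add: norm_mult)
        also have "\<dots> \<le> (\<Sum>k\<in>(UNIV::'n set). B * S)"
          by (intro sum_mono mult_mono aB t mS) (auto simp: B0)
        finally show ?thesis by (simp add: N_def)
      qed
      have "norm (m' ij t) \<le> norm (p t) * norm (m ij t) + N * B * S + N * B * S"
        unfolding m'_def
        by (rule order_trans[OF norm_triangle_ineq add_mono] order_trans[OF norm_triangle_ineq add_mono])+
           (auto simp: norm_mult sb)
      also have "\<dots> \<le> Bp * S + N * B * S + N * B * S"
        by (intro add_mono mult_mono Bp t mS) (auto simp: Bp0 B0 S0 N_def)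
      finally show "norm (m' ij t) \<le> (Bp + 2 * N * B) * (\<Sum>j\<in>UNIV. norm (m j t))"
        by (simp add: S_def algebra_simps)
    qed (use cI cvI t12 h in \<open>auto simp: m_def\<close>)
    then show ?thesis by (auto simp: m_def)
  qed
  show ?thesis using part1 part2 by blast
qed


lemma chart_inv:
  assumes "is_chart c" "q \<in> fst c"
  shows "inv_into (fst c) (snd c) (snd c q) = q"
  using assms by (simp add: is_chart_def inv_into_f_f)

lemma X_local: assumes "is_chart c" "q \<in> fst c" shows "X q c = local_rep X c (snd c q)"
  using chart_inv[OF assms] by (simp add: local_rep_def)

lemma transition_lin:
  assumes atl: "F_atlas A" and c: "c \<in> A" and d: "d \<in> A" and p: "p \<in> fst c" "p \<in> fst d"
  defines "T \<equiv> frechet_derivative (snd d \<circ> inv_into (fst c) (snd c)) (at (snd c p))"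
  shows "linear T" "\<And>a v. T (a *s v) = a *s T v"
proof -
  have cc: "is_chart c" "is_chart d" using atl c d by (auto simp: F_atlas_def)
  define U where "U = snd c ` (fst c \<inter> fst d)"
  have sm: "F_smooth_on U (snd d \<circ> inv_into (fst c) (snd c))"
    using atl c d by (auto simp: F_atlas_def U_def)
  have Ueq: "U = (inv_into (fst c) (snd c)) -` fst d \<inter> snd c ` fst c"
  proof
    show "U \<subseteq> (inv_into (fst c) (snd c)) -` fst d \<inter> snd c ` fst c"
      using chart_inv[OF cc(1)] by (auto simp: U_def)
    show "(inv_into (fst c) (snd c)) -` fst d \<inter> snd c ` fst c \<subseteq> U"
      using chart_inv[OF cc(1)] by (auto simp: U_def)
  qed
  have "open U"
  proof -
    have "open (snd c ` fst c)" "continuous_on (snd c ` fst c) (inv_into (fst c) (snd c))" "open (fst d)"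
      using cc unfolding is_chart_def by auto
    then show ?thesis unfolding Ueq using continuous_on_open_vimage by blast
  qed
  have pU: "snd c p \<in> U" using p by (auto simp: U_def)
  have "(snd d \<circ> inv_into (fst c) (snd c)) differentiable_on U"
    using sm unfolding F_smooth_on_def by (blast elim: smooth_map_on.cases)
  hence "(snd d \<circ> inv_into (fst c) (snd c)) differentiable (at (snd c p))"
    using pU \<open>open U\<close> unfolding differentiable_on_def by (metis at_within_open)
  then show "linear T" unfolding T_def frechet_derivative_works by (rule has_derivative_linear)
  show "T (a *s v) = a *s T v" for a v
    using sm pU unfolding F_smooth_on_def F_linear_def T_def by blast
qed

definition minors0 :: "'f::real_normed_field ^ 'n \<Rightarrow> 'f ^ 'n \<Rightarrow> bool" where
  "minors0 x y \<longleftrightarrow> (\<forall>i j. x $ i * y $ j - x $ j * y $ i = 0)"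

lemma dep_minors:
  fixes x y :: "'f::real_normed_field ^ 'n"
  shows "(\<exists>a b :: 'f. (a, b) \<noteq> (0, 0) \<and> a *s x + b *s y = 0) \<longleftrightarrow> minors0 x y"
proof
  assume "\<exists>a b :: 'f. (a, b) \<noteq> (0, 0) \<and> a *s x + b *s y = 0"
  then obtain a b :: 'f where ab: "(a, b) \<noteq> (0, 0)" "a *s x + b *s y = 0" by blast
  have comp: "a * x $ i + b * y $ i = 0" for i using ab(2) by (simp add: vec_eq_iff)
  show "minors0 x y" unfolding minors0_def
  proof (intro allI)
    fix i j
    show "x $ i * y $ j - x $ j * y $ i = 0"
    proof (cases "a = 0")
      case True
      then have "b \<noteq> 0" using ab by auto
      then have "y $ k = 0" for k using comp[of k] True by simp
      then show ?thesis by simp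
    next
      case False
      have "a * (x $ i * y $ j - x $ j * y $ i) = (a * x $ i) * y $ j - (a * x $ j) * y $ i"
        by (simp add: algebra_simps)
      also have "\<dots> = (- (b * y $ i)) * y $ j - (- (b * y $ j)) * y $ i"
      proof -
        have hi: "a * x $ i = - (b * y $ i)" using comp[of i] by (simp add: eq_neg_iff_add_eq_0)
        have hj: "a * x $ j = - (b * y $ j)" using comp[of j] by (simp add: eq_neg_iff_add_eq_0)
        show ?thesis by (simp only: hi hj)
      qed
      also have "\<dots> = 0" by (simp add: algebra_simps)
      finally show ?thesis using False by simp
    qed
  qed
next
  assume m: "minors0 x y"
  show "\<exists>a b :: 'f. (a, b) \<noteq> (0, 0) \<and> a *s x + b *s y = 0"
  proof (cases "y = 0")
    case True
    have "(0::'f, 1::'f) \<noteq> (0, 0) \<and> (0::'f) *s x + (1::'f) *s y = 0" using True by simp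
    then show ?thesis by blast
  next
    case False
    then obtain k where k: "y $ k \<noteq> 0" by (auto simp: vec_eq_iff)
    show ?thesis
    proof (rule exI[of _ "y $ k"], rule exI[of _ "- x $ k"], rule conjI)
      show "(y $ k, - x $ k) \<noteq> (0, 0)" using k by simp
      have "\<forall>i. (y $ k *s x + - x $ k *s y) $ i = 0 $ i"
      proof
        fix i
        have "x $ i * y $ k - x $ k * y $ i = 0" using m unfolding minors0_def by blast
        then show "(y $ k *s x + - x $ k *s y) $ i = 0 $ i" by (simp add: mult.commute)
      qed
      then show "y $ k *s x + - x $ k *s y = 0" by (simp add: vec_eq_iff del: vector_add_component vector_smult_component vector_uminus_component)
    qed
  qed
qed

lemma zero_set_iff:
  assumes atl: "F_atlas A" and vf: "vector_field A X" and c: "c \<in> A" and p: "p \<in> fst c"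
  shows "p \<in> zero_set A X \<longleftrightarrow> X p c = 0"
proof
  assume "p \<in> zero_set A X" then show "X p c = 0" using c p unfolding zero_set_def by blast
next
  assume h: "X p c = 0"
  show "p \<in> zero_set A X" unfolding zero_set_def
  proof (safe)
    fix d assume d: "d \<in> A" "p \<in> fst d"
    have "X p d = frechet_derivative (snd d \<circ> inv_into (fst c) (snd c)) (at (snd c p)) (X p c)"
      using vf c d p unfolding vector_field_def by blast
    then show "X p d = 0" using h linear_0[OF transition_lin(1)[OF atl c d(1) p d(2)]] by simp
  qed
qed

lemma dep_set_iff:
  fixes X Y :: "'p::topological_space \<Rightarrow> 'p set \<times> ('p \<Rightarrow> 'f::real_normed_field ^ 'n) \<Rightarrow> 'f ^ 'n"
  assumes atl: "F_atlas A" and vfX: "vector_field A X" and vfY: "vector_field A Y"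
    and c: "c \<in> A" and p: "p \<in> fst c"
  shows "p \<in> dep_set A X Y \<longleftrightarrow> minors0 (X p c) (Y p c)"
proof
  assume "p \<in> dep_set A X Y"
  then have "\<exists>a b :: 'f. (a, b) \<noteq> (0, 0) \<and> a *s X p c + b *s Y p c = 0"
    using c p unfolding dep_set_def by blast
  then show "minors0 (X p c) (Y p c)" by (simp only: dep_minors)
next
  assume h: "minors0 (X p c) (Y p c)"
  then obtain a b where ab: "(a, b) \<noteq> (0, 0)" "a *s X p c + b *s Y p c = 0"
    unfolding dep_minors[symmetric] by blast
  show "p \<in> dep_set A X Y" unfolding dep_set_def
  proof (safe)
    fix d assume d: "d \<in> A" "p \<in> fst d"
    define T where "T = frechet_derivative (snd d \<circ> inv_into (fst c) (snd c)) (at (snd c p))"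
    have lT: "linear T" and sT: "\<And>a v. T (a *s v) = a *s T v"
      using transition_lin[OF atl c d(1) p d(2)] by (auto simp: T_def)
    have "X p d = T (X p c)" "Y p d = T (Y p c)"
      using vfX vfY c d p unfolding vector_field_def T_def by blast+
    then have "a *s X p d + b *s Y p d = T (a *s X p c + b *s Y p c)"
      by (simp add: sT linear_add[OF lT])
    also have "\<dots> = 0" using ab(2) linear_0[OF lT] by simp
    finally show "\<exists>a b. (a, b) \<noteq> (0, 0) \<and> a *s X p d + b *s Y p d = 0" using ab(1) by blast
  qed
qed


lemma local_step:
  fixes A :: "(('p::topological_space) set \<times> ('p \<Rightarrow> 'f::real_normed_field ^ 'n)) set"
    and X Y V :: "'p \<Rightarrow> 'p set \<times> ('p \<Rightarrow> 'f ^ 'n) \<Rightarrow> 'f ^ 'n"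
    and f :: "'p \<Rightarrow> 'f"
  assumes atl: "F_atlas A" and dX: "diff_vector_field A X" and dY: "diff_vector_field A Y"
    and fc: "continuous_on UNIV f"
    and lie: "\<And>c p. c \<in> A \<Longrightarrow> p \<in> fst c \<Longrightarrow> lie_bracket_coord Y X p c = f p *s X p c"
    and V: "V = X \<or> V = Y"
    and ic: "integral_curve A V \<gamma> J" and c: "c \<in> A"
    and t12: "t1 \<in> J" "t2 \<in> J" and IJ: "closed_segment t1 t2 \<subseteq> J"
    and Ic: "\<gamma> ` closed_segment t1 t2 \<subseteq> fst c"
  shows "(X (\<gamma> t1) c = 0 \<longrightarrow> X (\<gamma> t2) c = 0) \<and>
         (minors0 (X (\<gamma> t1) c) (Y (\<gamma> t1) c) \<longrightarrow> minors0 (X (\<gamma> t2) c) (Y (\<gamma> t2) c))"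
proof -
  define I where "I = closed_segment t1 t2"
  have ch: "is_chart c" using atl c by (auto simp: F_atlas_def)
  define W where "W = snd c ` fst c"
  define \<phi> where "\<phi> t = snd c (\<gamma> t)" for t
  define xx where "xx t = local_rep X c (\<phi> t)" for t
  define yy where "yy t = local_rep Y c (\<phi> t)" for t
  define L where "L t = frechet_derivative (local_rep X c) (at (\<phi> t))" for t
  define M where "M t = frechet_derivative (local_rep Y c) (at (\<phi> t))" for t
  have gI: "\<gamma> t \<in> fst c" if "t \<in> I" for t using Ic that by (auto simp: I_def)
  have tJ: "t \<in> J" if "t \<in> I" for t using IJ that by (auto simp: I_def)
  have phW: "\<phi> t \<in> W" if "t \<in> I" for t using gI[OF that] by (simp add: \<phi>_def W_def)
  have Xe: "X (\<gamma> t) c = xx t" if "t \<in> I" for t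
    using X_local[OF ch gI[OF that], of X] by (simp add: xx_def \<phi>_def)
  have Ye: "Y (\<gamma> t) c = yy t" if "t \<in> I" for t
    using X_local[OF ch gI[OF that], of Y] by (simp add: yy_def \<phi>_def)
  have C1X: "F_C1_on W (local_rep X c)" using dX c by (simp add: diff_vector_field_def W_def)
  have C1Y: "F_C1_on W (local_rep Y c)" using dY c by (simp add: diff_vector_field_def W_def)
  have cI: "compact I" and cvI: "convex I" by (simp_all add: I_def)
  have cg: "continuous_on I \<gamma>"
    using ic IJ unfolding integral_curve_def I_def by (blast intro: continuous_on_subset)
  have cph: "continuous_on I \<phi>"
    unfolding \<phi>_def using ch cg gI
    by (intro continuous_on_compose2[of "fst c" "snd c" I \<gamma>]) (auto simp: is_chart_def)
  have dph: "((\<lambda>t. \<phi> t) has_vector_derivative V (\<gamma> t) c) (at t within I)" if t: "t \<in> I" for t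
  proof -
    have "((snd c \<circ> \<gamma>) has_vector_derivative V (\<gamma> t) c) (at t within J)"
      using ic tJ[OF t] gI[OF t] c unfolding integral_curve_def by blast
    then have "((snd c \<circ> \<gamma>) has_vector_derivative V (\<gamma> t) c) (at t within I)"
      by (rule has_vector_derivative_within_subset) (use IJ in \<open>simp add: I_def\<close>)
    then show ?thesis by (simp add: \<phi>_def o_def)
  qed
  have chain: "((\<lambda>t. G (\<phi> t)) has_vector_derivative frechet_derivative G (at (\<phi> t)) (V (\<gamma> t) c))
      (at t within I)" if C1: "F_C1_on W G" and t: "t \<in> I" for G t
  proof -
    have "G differentiable (at (\<phi> t))" using C1 phW[OF t] by (simp add: F_C1_on_def)
    then have "(G has_derivative frechet_derivative G (at (\<phi> t))) (at (\<phi> t) within \<phi> ` I)"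
      unfolding frechet_derivative_works by (rule has_derivative_at_withinI)
    from vector_derivative_diff_chain_within[OF dph[OF t] this] show ?thesis by (simp add: o_def)
  qed
  have linL: "linear (L t)" and FL: "L t (a *s v) = a *s L t v" if t: "t \<in> I" for t a v
  proof -
    have "local_rep X c differentiable (at (\<phi> t))" using C1X phW[OF t] by (simp add: F_C1_on_def)
    then show "linear (L t)" unfolding L_def frechet_derivative_works by (rule has_derivative_linear)
    show "L t (a *s v) = a *s L t v" using C1X phW[OF t] by (simp add: F_C1_on_def F_linear_def L_def)
  qed
  have linM: "linear (M t)" and FM: "M t (a *s v) = a *s M t v" if t: "t \<in> I" for t a v
  proof -
    have "local_rep Y c differentiable (at (\<phi> t))" using C1Y phW[OF t] by (simp add: F_C1_on_def)
    then show "linear (M t)" unfolding M_def frechet_derivative_works by (rule has_derivative_linear)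
    show "M t (a *s v) = a *s M t v" using C1Y phW[OF t] by (simp add: F_C1_on_def F_linear_def M_def)
  qed
  have cL: "continuous_on I (\<lambda>t. L t v)" for v
    unfolding L_def using C1X cph phW
    by (intro continuous_on_compose2[of W "\<lambda>z. frechet_derivative (local_rep X c) (at z) v" I \<phi>])
       (auto simp: F_C1_on_def)
  have cM: "continuous_on I (\<lambda>t. M t v)" for v
    unfolding M_def using C1Y cph phW
    by (intro continuous_on_compose2[of W "\<lambda>z. frechet_derivative (local_rep Y c) (at z) v" I \<phi>])
       (auto simp: F_C1_on_def)
  have cf: "continuous_on I (\<lambda>t. f (\<gamma> t))"
    using fc cg by (intro continuous_on_compose2[of UNIV f I \<gamma>]) auto
  have lieI: "L t (yy t) - M t (xx t) = f (\<gamma> t) *s xx t" if t: "t \<in> I" for t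
    using lie[OF c gI[OF t]] Xe[OF t] Ye[OF t]
    by (simp add: lie_bracket_coord_def L_def M_def \<phi>_def)
  have t12I: "t1 \<in> I" "t2 \<in> I" by (auto simp: I_def)
  have dXX: "(xx has_vector_derivative L t (V (\<gamma> t) c)) (at t within I)" if t: "t \<in> I" for t
    using chain[OF C1X t] unfolding xx_def[abs_def] L_def .
  have dYY: "(yy has_vector_derivative M t (V (\<gamma> t) c)) (at t within I)" if t: "t \<in> I" for t
    using chain[OF C1Y t] unfolding yy_def[abs_def] M_def .
  have hL: "L t (yy t) = f (\<gamma> t) *s xx t + M t (xx t)" if t: "t \<in> I" for t
    using lieI[OF t] by (simp only: diff_eq_eq)
  have hM: "M t (xx t) = (- f (\<gamma> t)) *s xx t + L t (yy t)" if t: "t \<in> I" for t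
  proof -
    have "(- f (\<gamma> t)) *s xx t + L t (yy t) = (- f (\<gamma> t)) *s xx t + (f (\<gamma> t) *s xx t + M t (xx t))"
      by (simp only: hL[OF t])
    also have "\<dots> = M t (xx t)" by (simp add: vec_eq_iff)
    finally show ?thesis by simp
  qed
  have main: "(xx t1 = 0 \<longrightarrow> xx t2 = 0) \<and>
    ((\<forall>i j. xx t1 $ i * yy t1 $ j - xx t1 $ j * yy t1 $ i = 0) \<longrightarrow>
     (\<forall>i j. xx t2 $ i * yy t2 $ j - xx t2 $ j * yy t2 $ i = 0))"
    using V
  proof
    assume VX: "V = X"
    show ?thesis
    proof (rule evolve[OF cI cvI _ _ _ _ _ cL t12I, where p = "\<lambda>t. 0" and r = "\<lambda>t. - f (\<gamma> t)"])
      fix t assume t: "t \<in> I"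
      have e: "V (\<gamma> t) c = xx t" using VX Xe[OF t] by simp
      show "(xx has_vector_derivative (0 *s xx t + L t (xx t))) (at t within I)"
        using dXX[OF t] unfolding e by simp
      show "(yy has_vector_derivative (- f (\<gamma> t) *s xx t + L t (yy t))) (at t within I)"
        using dYY[OF t] unfolding e hM[OF t] .
    qed (auto intro: linL FL)
  next
    assume VY: "V = Y"
    show ?thesis
    proof (rule evolve[OF cI cvI _ _ cf _ _ cM t12I, where r = "\<lambda>t. 0"])
      fix t assume t: "t \<in> I"
      have e: "V (\<gamma> t) c = yy t" using VY Ye[OF t] by simp
      show "(xx has_vector_derivative (f (\<gamma> t) *s xx t + M t (xx t))) (at t within I)"
        using dXX[OF t] unfolding e hL[OF t] .
      show "(yy has_vector_derivative (0 *s xx t + M t (yy t))) (at t within I)"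
        using dYY[OF t] unfolding e by simp
    qed (auto intro: linM FM)
  qed
  then show ?thesis using Xe[OF t12I(1)] Xe[OF t12I(2)] Ye[OF t12I(1)] Ye[OF t12I(2)]
    by (simp add: minors0_def)
qed


lemma inv_generic:
  fixes A :: "(('p::topological_space) set \<times> ('p \<Rightarrow> 'f::real_normed_field ^ 'n)) set"
  assumes atl: "F_atlas A"
    and ic: "integral_curve A V \<gamma> J" and J0: "0 \<in> J" and S0: "\<gamma> 0 \<in> S"
    and Siff: "\<And>c p. c \<in> A \<Longrightarrow> p \<in> fst c \<Longrightarrow> (p \<in> S \<longleftrightarrow> Q p c)"
    and step: "\<And>c t1 t2. c \<in> A \<Longrightarrow> t1 \<in> J \<Longrightarrow> t2 \<in> J \<Longrightarrow> closed_segment t1 t2 \<subseteq> J \<Longrightarrow>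
       \<gamma> ` closed_segment t1 t2 \<subseteq> fst c \<Longrightarrow> Q (\<gamma> t1) c \<Longrightarrow> Q (\<gamma> t2) c"
  shows "\<gamma> ` J \<subseteq> S"
proof -
  have iJ: "is_interval J" and cg: "continuous_on J \<gamma>" using ic by (auto simp: integral_curve_def)
  have cvJ: "convex J" using iJ by (rule is_interval_convex)
  have charts: "\<And>c. c \<in> A \<Longrightarrow> open (fst c)" and cov: "(\<Union>c\<in>A. fst c) = UNIV"
    using atl by (auto simp: F_atlas_def is_chart_def)
  show ?thesis
  proof
    fix q assume "q \<in> \<gamma> ` J"
    then obtain b where b: "b \<in> J" "q = \<gamma> b" by blast
    have "\<gamma> b \<in> S"
    proof (rule connected_induction_simple[of J 0 b "\<lambda>t. \<gamma> t \<in> S"])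
      show "connected J" using cvJ by (rule convex_connected)
      show "0 \<in> J" "b \<in> J" "\<gamma> 0 \<in> S" by (fact J0, fact b(1), fact S0)
      fix a assume a: "a \<in> J"
      obtain c where c: "c \<in> A" "\<gamma> a \<in> fst c" using cov by blast
      have "openin (top_of_set J) (J \<inter> \<gamma> -` fst c)"
        by (rule continuous_openin_preimage_gen[OF cg charts[OF c(1)]])
      then obtain e where e: "e > 0" "\<And>x'. x' \<in> J \<Longrightarrow> dist x' a < e \<Longrightarrow> x' \<in> J \<inter> \<gamma> -` fst c"
        using a c(2) unfolding openin_euclidean_subtopology_iff by blast
      define T where "T = J \<inter> ball a e"
      have cvT: "convex T" unfolding T_def using cvJ by (simp add: convex_Int)
      show "\<exists>T. openin (top_of_set J) T \<and> a \<in> T \<and> (\<forall>x\<in>T. \<forall>y\<in>T. \<gamma> x \<in> S \<longrightarrow> \<gamma> y \<in> S)"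
      proof (intro exI conjI ballI impI)
        show "openin (top_of_set J) T" unfolding T_def by (rule openin_open_Int) simp
        show "a \<in> T" using a e by (simp add: T_def)
        fix x y assume xy: "x \<in> T" "y \<in> T" and Sx: "\<gamma> x \<in> S"
        have seg: "closed_segment x y \<subseteq> T" by (rule closed_segment_subset[OF xy cvT])
        have TJ: "T \<subseteq> J" by (simp add: T_def)
        have Tc: "\<gamma> ` T \<subseteq> fst c"
          using e(2) by (auto simp: T_def dist_commute)
        have xc: "\<gamma> x \<in> fst c" "\<gamma> y \<in> fst c" using Tc xy by auto
        have Qx: "Q (\<gamma> x) c" using Siff[OF c(1) xc(1)] Sx by simp
        have "Q (\<gamma> y) c"
          by (rule step[OF c(1) _ _ _ _ Qx]) (use xy TJ seg Tc in auto)
        then show "\<gamma> y \<in> S" using Siff[OF c(1) xc(2)] by simp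
      qed
    qed
    then show "q \<in> S" using b by simp
  qed
qed

theorem proposition4p1:
  fixes A :: "(('p::{t2_space, second_countable_topology}) set \<times> ('p \<Rightarrow> 'f::real_normed_field ^ 'n)) set"
    and X Y :: "'p \<Rightarrow> 'p set \<times> ('p \<Rightarrow> 'f ^ 'n) \<Rightarrow> 'f ^ 'n"
  assumes "F_atlas A"
    and "diff_vector_field A X"
    and "diff_vector_field A Y"
    and "tracks A Y X"
  shows "invariant A X (zero_set A X) \<and> invariant A Y (zero_set A X)
       \<and> invariant A X (dep_set A X Y) \<and> invariant A Y (dep_set A X Y)"
proof -
  note atl = assms(1) and dX = assms(2) and dY = assms(3)
  obtain f :: "'p \<Rightarrow> 'f" where fc: "continuous_on UNIV f"
    and lie: "\<And>c p. c \<in> A \<Longrightarrow> p \<in> fst c \<Longrightarrow> lie_bracket_coord Y X p c = f p *s X p c"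
    using assms(4) unfolding tracks_def by blast
  have vX: "vector_field A X" and vY: "vector_field A Y"
    using dX dY by (auto simp: diff_vector_field_def)
  have Z: "invariant A V (zero_set A X)" if V: "V = X \<or> V = Y" for V
    unfolding invariant_def
  proof (intro allI impI)
    fix \<gamma> and J :: "real set"
    assume h: "integral_curve A V \<gamma> J \<and> 0 \<in> J \<and> \<gamma> 0 \<in> zero_set A X"
    show "\<gamma> ` J \<subseteq> zero_set A X"
    proof (rule inv_generic[where Q = "\<lambda>p c. X p c = 0"])
      show "F_atlas A" by (fact atl)
      show "integral_curve A V \<gamma> J" "0 \<in> J" "\<gamma> 0 \<in> zero_set A X" using h by auto
      show "\<And>c p. c \<in> A \<Longrightarrow> p \<in> fst c \<Longrightarrow> (p \<in> zero_set A X) = (X p c = 0)"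
        by (rule zero_set_iff[OF atl vX])
      fix c t1 t2 assume "c \<in> A" "t1 \<in> J" "t2 \<in> J" "closed_segment t1 t2 \<subseteq> J"
        "\<gamma> ` closed_segment t1 t2 \<subseteq> fst c" "X (\<gamma> t1) c = 0"
      then show "X (\<gamma> t2) c = 0"
        using local_step[OF atl dX dY fc lie V, of \<gamma> J c t1 t2] h by blast
    qed
  qed
  have D: "invariant A V (dep_set A X Y)" if V: "V = X \<or> V = Y" for V
    unfolding invariant_def
  proof (intro allI impI)
    fix \<gamma> and J :: "real set"
    assume h: "integral_curve A V \<gamma> J \<and> 0 \<in> J \<and> \<gamma> 0 \<in> dep_set A X Y"
    show "\<gamma> ` J \<subseteq> dep_set A X Y"
    proof (rule inv_generic[where Q = "\<lambda>p c. minors0 (X p c) (Y p c)"])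
      show "F_atlas A" by (fact atl)
      show "integral_curve A V \<gamma> J" "0 \<in> J" "\<gamma> 0 \<in> dep_set A X Y" using h by auto
      show "\<And>c p. c \<in> A \<Longrightarrow> p \<in> fst c \<Longrightarrow> (p \<in> dep_set A X Y) = minors0 (X p c) (Y p c)"
        by (rule dep_set_iff[OF atl vX vY])
      fix c t1 t2 assume "c \<in> A" "t1 \<in> J" "t2 \<in> J" "closed_segment t1 t2 \<subseteq> J"
        "\<gamma> ` closed_segment t1 t2 \<subseteq> fst c" "minors0 (X (\<gamma> t1) c) (Y (\<gamma> t1) c)"
      then show "minors0 (X (\<gamma> t2) c) (Y (\<gamma> t2) c)"
        using local_step[OF atl dX dY fc lie V, of \<gamma> J c t1 t2] h by blast
    qed
  qed
  show ?thesis using Z D by blast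
qed

end
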